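(* Let $p$ be an odd prime and $X,Y\in\mathcal{X}_p$. Then $X\subseteq Y$ if and only if $i(Y)$ divides $i(X)$.
   Context: $\mathbb{N}=\{1,2,\dots\}$, $\mathbb{N}_0=\{0\}\cup\mathbb{N}$, $x^{\mathbb{N}}=\{x^k:k\in\mathbb{N}\}$. $\mathbb{Z}_{p^n}=\mathbb{Z}/p^n\mathbb{Z}$ with unit group $\mathbb{Z}_{p^n}^\times$, and $\pi_n:\mathbb{N}\to\mathbb{Z}_{p^n}$, $x\mapsto x+p^n\mathbb{Z}$. The $p$-adic topology on $\mathbb{N}\setminus p\mathbb{N}$ is generated by the sets $x+p^m\mathbb{N}_0$. $\mathcal{X}_p=\{\overline{a^{\mathbb{N}}}:a\in\mathbb{N}\setminus p\mathbb{N},\ a\ne1\}$, closures in the $p$-adic topology on $\mathbb{N}\setminus p\mathbb{N}$. For $X\in\mathcal{X}_p$, $n(X)=\min\{n\in\mathbb{N}: X=\pi_n^{-1}(\pi_n(X)),\ |\pi_n(X)|\ge\max\{p,3\}\}$ (this is well defined, and $\pi_{n(X)}(X)$ is a cyclic subgroup of $\mathbb{Z}_{p^{n(X)}}^\times$), and $i(X)$ is the index of the subgroup $\pi_{n(X)}(X)$ in $\mathbb{Z}_{p^{n(X)}}^\times$. *)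

theory Defs
  imports "HOL-Analysis.Analysis"
begin

definition coprimeN :: "nat \<Rightarrow> nat set" where
  "coprimeN p = {x. x \<ge> 1 \<and> \<not> p dvd x}"

definition padic_top :: "nat \<Rightarrow> nat topology" where
  "padic_top p = topology_generated_by
     {{x + p ^ m * k | k. True} | x m. x \<in> coprimeN p \<and> m \<ge> 1}"

definition powN :: "nat \<Rightarrow> nat set" where
  "powN a = {a ^ k | k. k \<ge> 1}"

definition Xp :: "nat \<Rightarrow> nat set set" where
  "Xp p = {padic_top p closure_of powN a | a. a \<in> coprimeN p \<and> a \<noteq> 1}"

definition pi_res :: "nat \<Rightarrow> nat \<Rightarrow> nat \<Rightarrow> nat" where
  "pi_res p n x = x mod p ^ n"

definition nX :: "nat \<Rightarrow> nat set \<Rightarrow> nat" where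
  "nX p X = (LEAST n. n \<ge> 1 \<and>
      X = {x. x \<ge> 1 \<and> pi_res p n x \<in> pi_res p n ` X} \<and>
      card (pi_res p n ` X) \<ge> max p 3)"

definition units_res :: "nat \<Rightarrow> nat set" where
  "units_res m = {u. u < m \<and> coprime u m}"

text \<open>i(X): index of pi_{n(X)}(X) in the unit group Z_{p^{n(X)}}^x (finite groups:
  index = quotient of the orders).\<close>
definition iX :: "nat \<Rightarrow> nat set \<Rightarrow> nat" where
  "iX p X = card (units_res (p ^ nX p X)) div card (pi_res p (nX p X) ` X)"

end

theory Submission
  imports Defs "HOL-Number_Theory.Number_Theory"
begin


lemma binom_exp3:
  fixes x :: int
  shows "\<exists>r. (1 + x) ^ i = 1 + int i * x + int (i choose 2) * x^2 + x^3 * r"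
proof (induction i)
  case 0 then show ?case by (intro exI[of _ 0]) simp
next
  case (Suc i)
  then obtain r where r: "(1 + x) ^ i = 1 + int i * x + int (i choose 2) * x^2 + x^3 * r" by blast
  have c: "Suc i choose 2 = i + (i choose 2)"
    by (simp add: numeral_2_eq_2)
  have "(1 + x) ^ Suc i = (1 + int i * x + int (i choose 2) * x^2 + x^3 * r) * (1 + x)"
    using r by simp
  also have "\<dots> = 1 + int (Suc i) * x + int (Suc i choose 2) * x^2 + x^3 * (int (i choose 2) + r + r * x)"
    unfolding c by (simp add: algebra_simps power2_eq_square power3_eq_cube)
  finally show ?case by blast
qed

lemma odd_prime_dvd_choose2:
  assumes "odd (p::nat)" shows "p dvd (p choose 2)"
proof -
  obtain q where q: "p = 2*q+1" using assms oddE by blast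
  have "p choose 2 = p * (p - 1) div 2" by (rule choose_two)
  also have "\<dots> = p * q" using q by simp
  finally show ?thesis by simp
qed

lemma key_lte:
  fixes x :: int and p m :: nat
  assumes "odd p" "m \<ge> 1" "int p ^ m dvd x"
  shows "int p ^ (m+2) dvd (1 + x) ^ p - 1 - int p * x"
proof -
  obtain r where r: "(1 + x) ^ p = 1 + int p * x + int (p choose 2) * x^2 + x^3 * r"
    using binom_exp3 by blast
  obtain y where y: "x = int p ^ m * y" using assms(3) by blast
  obtain q where q: "p choose 2 = p * q" using odd_prime_dvd_choose2[OF assms(1)] by blast
  have e: "(1 + x) ^ p - 1 - int p * x = int p ^ (m+2) * (int p ^ (m - 1) * int q * y^2 + int p ^ (2*m - 2) * y^3 * r)"
  proof -
    have "(1 + x) ^ p - 1 - int p * x = int p * int q * (int p ^ m * y)^2 + (int p ^ m * y)^3 * r"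
      using r y q by simp
    also have "\<dots> = int p ^ (1 + m + m) * int q * y^2 + int p ^ (m+m+m) * y^3 * r"
      by (simp add: power_add power2_eq_square power3_eq_cube algebra_simps)
    also have "1 + m + m = (m + 2) + (m - 1)" using assms(2) by simp
    also have "m + m + m = (m + 2) + (2*m - 2)" using assms(2) by simp
    finally show ?thesis by (simp add: power_add algebra_simps)
  qed
  show ?thesis unfolding e by simp
qed

lemma cong_nat_int_dvd: "[(y::nat) = b] (mod n) \<longleftrightarrow> int n dvd int y - int b"
  by (simp add: cong_int_iff[symmetric] cong_iff_dvd_diff)

lemma lte_seq:
  fixes B u :: int and p v :: nat
  assumes "odd p" "v \<ge> 1" "B = 1 + u * int p ^ v"
  shows "\<exists>w. B ^ (p ^ j) = 1 + u * int p ^ (v + j) + int p ^ (v + j + 1) * w"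
proof (induction j)
  case 0 then show ?case using assms by (intro exI[of _ 0]) simp
next
  case (Suc j)
  then obtain w where w: "B ^ (p ^ j) = 1 + u * int p ^ (v + j) + int p ^ (v + j + 1) * w" by blast
  define x where "x = u * int p ^ (v + j) + int p ^ (v + j + 1) * w"
  have dx: "int p ^ (v + j) dvd x" unfolding x_def
  proof (rule dvd_add)
    show "int p ^ (v + j) dvd int p ^ (v + j + 1) * w"
      by (rule dvd_mult2) (simp add: le_imp_power_dvd)
  qed simp
  from key_lte[OF assms(1) _ dx] assms(2)
  obtain t where t: "(1 + x) ^ p - 1 - int p * x = int p ^ (v + j + 2) * t" by fastforce
  have "B ^ (p ^ Suc j) = (B ^ (p ^ j)) ^ p" by (simp add: power_mult[symmetric] mult.commute)
  also have "\<dots> = (1 + x) ^ p" using w x_def by (simp add: add.assoc)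
  also have "\<dots> = 1 + int p * x + int p ^ (v + j + 2) * t" using t by (simp add: algebra_simps eq_diff_eq)
  also have "\<dots> = 1 + u * int p ^ (v + Suc j) + int p ^ (v + Suc j + 1) * (w + t)"
    unfolding x_def by (simp add: algebra_simps)
  finally show ?case by blast
qed


lemma pow_dvd_sq:
  fixes X :: int and p m :: nat
  assumes "m \<ge> 1" "int p ^ m dvd X"
  shows "int p ^ (m+1) dvd X^2" "int p ^ (m+1) dvd X^3"
proof -
  obtain e where e: "X = int p ^ m * e" using assms(2) by blast
  have pe: "int p ^ (m+1) * int p ^ (m-1) = int p ^ m * int p ^ m"
    unfolding power_add[symmetric] using assms(1) by (simp add: algebra_simps)
  have "X^2 = (int p ^ (m+1) * int p ^ (m - 1)) * e^2"
    unfolding pe e by (simp add: power2_eq_square algebra_simps)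
  then show "int p ^ (m+1) dvd X^2" by simp
  have "X^3 = (int p ^ (m+1) * int p ^ (m - 1)) * int p ^ m * e^3"
    unfolding pe e by (simp add: power3_eq_cube algebra_simps)
  then show "int p ^ (m+1) dvd X^3" by simp
qed

lemma lift_step:
  fixes p a v y k m :: nat and u :: int
  assumes p: "prime p" "odd p" and cop: "coprime a p" and v: "v \<ge> 1" and u: "\<not> int p dvd u"
    and au: "int a ^ (p-1) = 1 + u * int p ^ v" and mv: "m \<ge> v"
    and yk: "[y = a^k] (mod p^m)"
  shows "\<exists>k'. [y = a^k'] (mod p^(m+1))"
proof -
  define j where "j = m - v"
  have mj: "v + j = m" using mv j_def by simp
  have m1: "m \<ge> 1" using mv v by simp
  obtain w where w: "(int a ^ (p-1)) ^ (p^j) = 1 + u * int p ^ m + int p ^ (m+1) * w"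
    using lte_seq[OF p(2) v au, of j] mj by auto
  define c where "c = int a ^ ((p-1) * p^j)"
  define X where "X = u * int p ^ m + int p ^ (m+1) * w"
  have cX: "c = 1 + X" using w unfolding c_def X_def by (simp add: power_mult add.assoc)
  have dX: "int p ^ m dvd X" unfolding X_def
  proof (rule dvd_add)
    show "int p ^ m dvd int p ^ (m + 1) * w"
      by (rule dvd_mult2) (simp add: le_imp_power_dvd)
  qed simp
  have ci: "int p ^ (m+1) dvd c ^ i - 1 - int i * u * int p ^ m" for i
  proof -
    obtain r where r: "(1 + X) ^ i = 1 + int i * X + int (i choose 2) * X^2 + X^3 * r"
      using binom_exp3 by blast
    have "c ^ i - 1 - int i * u * int p ^ m = int i * (int p ^ (m+1) * w) + int (i choose 2) * X^2 + X^3 * r"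
      unfolding cX r by (simp add: X_def algebra_simps)
    moreover have "int p ^ (m+1) dvd int i * (int p ^ (m+1) * w) + int (i choose 2) * X^2 + X^3 * r"
      using pow_dvd_sq[OF m1 dX] by (intro dvd_add) (auto intro: dvd_mult dvd_mult2)
    ultimately show ?thesis by simp
  qed
  define T where "T = totient (p ^ (m+1))"
  have T1: "T \<ge> 1" unfolding T_def using p(1) by (simp add: Suc_le_eq prime_gt_0_nat)
  have copm: "coprime a (p ^ (m+1))" using cop by simp
  have aT: "int p ^ (m+1) dvd int a ^ (k*T) - 1"
  proof -
    have "[a ^ T = 1] (mod p ^ (m+1))" unfolding T_def by (rule euler_theorem[OF copm])
    then have "[(a ^ T) ^ k = 1 ^ k] (mod p ^ (m+1))" by (rule cong_pow)
    then have "[a ^ (k * T) = 1] (mod p ^ (m+1))" by (simp add: power_mult mult.commute)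
    then show ?thesis by (simp add: cong_nat_int_dvd)
  qed
  define z where "z = int y * int a ^ (k * (T - 1))"
  have kT: "k * T = k * (T - 1) + k" using T1 by (simp add: algebra_simps)
  have "int p ^ m dvd z - 1"
  proof -
    have e: "z - 1 = (int y - int a ^ k) * int a ^ (k * (T - 1)) + (int a ^ (k * T) - 1)"
      unfolding z_def kT by (simp add: power_add algebra_simps)
    have d1: "int p ^ m dvd int y - int a ^ k" using yk by (simp add: cong_nat_int_dvd)
    have d2: "int p ^ m dvd int a ^ (k * T) - 1"
      by (rule dvd_trans[OF _ aT]) (simp add: le_imp_power_dvd)
    show ?thesis unfolding e using d1 d2 by (intro dvd_add dvd_mult2) auto
  qed
  then obtain s where s: "z - 1 = int p ^ m * s" by blast
  have pint: "prime (int p)" using p(1) by simp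
  have copu: "coprime u (int p)" using prime_imp_coprime[OF pint u] by (simp add: coprime_commute)
  obtain u' where u': "[u * u' = 1] (mod int p)" using cong_solve_coprime_int[OF copu] by blast
  define i where "i = nat ((u' * s) mod int p)"
  have ii: "int i = (u' * s) mod int p" unfolding i_def using p(1) by (simp add: prime_gt_0_nat)
  have ius: "int p dvd s - int i * u"
  proof -
    have "[int i * u = (u' * s) * u] (mod int p)" unfolding ii by (intro cong_mult) (auto simp: cong_def)
    also have "(u' * s) * u = s * (u * u')" by (simp add: algebra_simps)
    also have "[s * (u * u') = s * 1] (mod int p)" by (intro cong_mult u') auto
    finally show ?thesis by (simp add: cong_iff_dvd_diff dvd_diff_commute)
  qed
  have zc: "int p ^ (m+1) dvd z - c ^ i"
  proof -
    have e: "z - c ^ i = int p ^ m * (s - int i * u) - (c ^ i - 1 - int i * u * int p ^ m)"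
      using s by (simp add: algebra_simps eq_diff_eq)
    have d1: "int p ^ (m+1) dvd int p ^ m * (s - int i * u)"
      using ius by (simp add: mult_dvd_mono)
    show ?thesis unfolding e by (rule dvd_diff[OF d1 ci])
  qed
  define k' where "k' = (p - 1) * p ^ j * i + k"
  have ak': "int a ^ k' = c ^ i * int a ^ k" unfolding k'_def c_def by (simp add: power_add power_mult)
  have "int y - int a ^ k' = int y * (1 - int a ^ (k * T)) + int a ^ k * (z - c ^ i)"
    unfolding ak' z_def kT by (simp add: power_add algebra_simps)
  moreover have "int p ^ (m+1) dvd int y * (1 - int a ^ (k * T)) + int a ^ k * (z - c ^ i)"
    using aT zc by (intro dvd_add dvd_mult) (auto simp: dvd_diff_commute)
  ultimately have "int p ^ (m+1) dvd int y - int a ^ k'" by simp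
  then show ?thesis by (auto simp: cong_nat_int_dvd)
qed


definition Xa :: "nat \<Rightarrow> nat \<Rightarrow> nat set" where
  "Xa p a = {y. y \<ge> 1 \<and> (\<forall>m\<ge>1. \<exists>k. [y = a^k] (mod p^m))}"

lemma basis_sub_coprimeN:
  assumes "x \<in> coprimeN p" "m \<ge> 1" "prime p"
  shows "{x + p ^ m * k | k. True} \<subseteq> coprimeN p"
proof
  fix y assume "y \<in> {x + p ^ m * k | k. True}"
  then obtain k where y: "y = x + p ^ m * k" by blast
  have "p dvd p ^ m * k" using assms(2) by (simp add: dvd_mult2 dvd_power)
  then have "\<not> p dvd y" using assms(1) unfolding y coprimeN_def by (auto simp: dvd_add_left_iff)
  moreover have "y \<ge> 1" using assms(1) unfolding y coprimeN_def by auto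
  ultimately show "y \<in> coprimeN p" unfolding coprimeN_def by auto
qed

lemma topspace_padic:
  assumes "prime p"
  shows "topspace (padic_top p) = coprimeN p"
proof -
  have "topspace (padic_top p) = \<Union>{{x + p ^ m * k | k. True} | x m. x \<in> coprimeN p \<and> m \<ge> 1}"
    unfolding padic_top_def by simp
  also have "\<dots> = coprimeN p"
  proof
    show "\<Union>{{x + p ^ m * k | k. True} | x m. x \<in> coprimeN p \<and> m \<ge> 1} \<subseteq> coprimeN p"
      using basis_sub_coprimeN[OF _ _ assms] by blast
    show "coprimeN p \<subseteq> \<Union>{{x + p ^ m * k | k. True} | x m. x \<in> coprimeN p \<and> m \<ge> 1}"
    proof
      fix y assume y: "y \<in> coprimeN p"
      have "y \<in> {y + p ^ 1 * k | k. True}" by (auto intro: exI[of _ 0])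
      with y show "y \<in> \<Union>{{x + p ^ m * k | k. True} | x m. x \<in> coprimeN p \<and> m \<ge> 1}" by blast
    qed
  qed
  finally show ?thesis .
qed

lemma basis_mono:
  assumes "m \<le> m'"
  shows "{y + p ^ m' * k | k. True} \<subseteq> {y + p ^ m * k | k::nat. True}"
proof
  fix z assume "z \<in> {y + p ^ m' * k | k. True}"
  then obtain k where z: "z = y + p ^ m' * k" by blast
  have "p ^ m' = p ^ m * p ^ (m' - m)" using assms by (simp add: power_add[symmetric])
  then have "z = y + p ^ m * (p ^ (m' - m) * k)" using z by simp
  then show "z \<in> {y + p ^ m * k | k. True}" by blast
qed

lemma open_nbhd:
  assumes "generate_topology_on {{x + p ^ m * k | k. True} | x m. x \<in> coprimeN p \<and> m \<ge> 1} T"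
  shows "y \<in> T \<Longrightarrow> \<exists>m\<ge>1. {y + p ^ m * k | k. True} \<subseteq> T"
  using assms
proof (induction arbitrary: y rule: generate_topology_on.induct)
  case Empty then show ?case by simp
next
  case (Int a b)
  then obtain m1 m2 where m1: "m1 \<ge> 1" "{y + p ^ m1 * k | k. True} \<subseteq> a"
    and m2: "m2 \<ge> 1" "{y + p ^ m2 * k | k. True} \<subseteq> b" by (meson IntE)
  have "{y + p ^ max m1 m2 * k | k. True} \<subseteq> a"
    using m1(2) basis_mono[of m1 "max m1 m2" y p] by simp
  moreover have "{y + p ^ max m1 m2 * k | k. True} \<subseteq> b"
    using m2(2) basis_mono[of m2 "max m1 m2" y p] by simp
  ultimately show ?case using m1(1) by (intro exI[of _ "max m1 m2"]) auto
next
  case (UN K)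
  then obtain k where "k \<in> K" "y \<in> k" by blast
  with UN.IH show ?case by blast
next
  case (Basis s)
  then obtain x m where s: "s = {x + p ^ m * k | k. True}" "m \<ge> 1" by blast
  with Basis.prems obtain k0 where y: "y = x + p ^ m * k0" by blast
  have "{y + p ^ m * k | k. True} \<subseteq> s"
  proof
    fix z assume "z \<in> {y + p ^ m * k | k. True}"
    then obtain k where "z = y + p ^ m * k" by blast
    then have "z = x + p ^ m * (k0 + k)" using y by (simp add: algebra_simps)
    then show "z \<in> s" using s by blast
  qed
  with s show ?case by blast
qed


lemma open_nbhd':
  assumes "openin (padic_top p) T" "y \<in> T"
  shows "\<exists>m\<ge>1. {y + p ^ m * k | k. True} \<subseteq> T"
proof -
  have "generate_topology_on {{x + p ^ m * k | k. True} | x m. x \<in> coprimeN p \<and> m \<ge> 1} T"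
    using assms(1) unfolding padic_top_def by (simp add: openin_topology_generated_by_iff)
  then show ?thesis using open_nbhd assms(2) by blast
qed



lemma closure_char:
  assumes "prime p"
  shows "padic_top p closure_of S =
     {y \<in> coprimeN p. \<forall>m\<ge>1. \<exists>s\<in>S. \<exists>k. s = y + p ^ m * k}"
proof -
  let ?B = "{{x + p ^ m * k | k. True} | x m. x \<in> coprimeN p \<and> m \<ge> 1}"
  have op: "openin (padic_top p) T \<longleftrightarrow> generate_topology_on ?B T" for T
    unfolding padic_top_def by (rule openin_topology_generated_by_iff)
  have 1: "\<exists>s\<in>S. \<exists>k. s = y + p ^ m * k" if y: "y \<in> padic_top p closure_of S" and m: "m \<ge> 1" for y m
  proof -
    have yc: "y \<in> coprimeN p" using y topspace_padic[OF assms] unfolding in_closure_of by simp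
    have "{y + p ^ m * k | k. True} \<in> ?B" using yc m by blast
    then have "openin (padic_top p) {y + p ^ m * k | k. True}"
      unfolding op by (rule generate_topology_on.Basis)
    moreover have "y \<in> {y + p ^ m * k | k. True}" by (auto intro: exI[of _ 0])
    ultimately obtain s where "s \<in> S" "s \<in> {y + p ^ m * k | k. True}"
      using y unfolding in_closure_of by metis
    then show ?thesis by blast
  qed
  have 2: "y \<in> padic_top p closure_of S"
    if yc: "y \<in> coprimeN p" and y: "\<forall>m\<ge>1. \<exists>s\<in>S. \<exists>k. s = y + p ^ m * k" for y
  proof -
    have "\<exists>s. s \<in> S \<and> s \<in> T" if yT: "y \<in> T" and oT: "openin (padic_top p) T" for T
    proof -
      obtain m where m: "m \<ge> 1" "{y + p ^ m * k | k. True} \<subseteq> T"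
        using open_nbhd'[OF oT yT] by blast
      from y m(1) obtain s k where "s \<in> S" "s = y + p ^ m * k" by blast
      with m(2) show ?thesis by blast
    qed
    then show ?thesis unfolding in_closure_of topspace_padic[OF assms] using yc by blast
  qed
  show ?thesis
  proof (intro subset_antisym subsetI)
    fix y assume y: "y \<in> padic_top p closure_of S"
    then have "y \<in> coprimeN p" using topspace_padic[OF assms] unfolding in_closure_of by simp
    with 1[OF y] show "y \<in> {y \<in> coprimeN p. \<forall>m\<ge>1. \<exists>s\<in>S. \<exists>k. s = y + p ^ m * k}" by blast
  next
    fix y assume "y \<in> {y \<in> coprimeN p. \<forall>m\<ge>1. \<exists>s\<in>S. \<exists>k. s = y + p ^ m * k}"
    then show "y \<in> padic_top p closure_of S" using 2 by blast
  qed
qed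


lemma a_ge2: "a \<in> coprimeN p \<Longrightarrow> a \<noteq> 1 \<Longrightarrow> a \<ge> 2"
  unfolding coprimeN_def by auto

lemma coprime_of_coprimeN: "prime p \<Longrightarrow> a \<in> coprimeN p \<Longrightarrow> coprime a p"
  unfolding coprimeN_def by (metis mem_Collect_eq prime_imp_coprime coprime_commute)

lemma closure_eq_Xa:
  assumes p: "prime p" and a: "a \<in> coprimeN p" "a \<noteq> 1"
  shows "padic_top p closure_of powN a = Xa p a"
proof -
  have a2: "a \<ge> 2" using a_ge2[OF a] .
  have copa: "coprime a p" using coprime_of_coprimeN[OF p a(1)] .
  have "(y \<in> coprimeN p \<and> (\<forall>m\<ge>1. \<exists>s\<in>powN a. \<exists>k. s = y + p ^ m * k)) \<longleftrightarrow>
        (y \<ge> 1 \<and> (\<forall>m\<ge>1. \<exists>k. [y = a^k] (mod p^m)))" for y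
  proof
    assume h: "y \<in> coprimeN p \<and> (\<forall>m\<ge>1. \<exists>s\<in>powN a. \<exists>k. s = y + p ^ m * k)"
    have "\<exists>k. [y = a^k] (mod p^m)" if m: "m \<ge> 1" for m
    proof -
      obtain s q where s: "s \<in> powN a" "s = y + p ^ m * q" using h m by blast
      obtain j where j: "s = a ^ j" using s(1) unfolding powN_def by blast
      have "[y = y + p ^ m * q] (mod p ^ m)" by (simp add: cong_def)
      then have "[y = a ^ j] (mod p^m)" using s j by simp
      then show ?thesis by blast
    qed
    moreover have "y \<ge> 1" using h unfolding coprimeN_def by simp
    ultimately show "y \<ge> 1 \<and> (\<forall>m\<ge>1. \<exists>k. [y = a^k] (mod p^m))" by blast
  next
    assume h: "y \<ge> 1 \<and> (\<forall>m\<ge>1. \<exists>k. [y = a^k] (mod p^m))"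
    have "\<not> p dvd y"
    proof -
      obtain k where k: "[y = a^k] (mod p^1)" using h by blast
      have "\<not> p dvd a ^ k"
      proof
        assume "p dvd a ^ k"
        then have "p dvd a" by (rule prime_dvd_power[OF p])
        then have "p = 1" using coprime_common_divisor_nat[OF copa _ dvd_refl] by blast
        then show False using p by simp
      qed
      then show ?thesis using cong_dvd_iff[of y "a^k" p] k by simp
    qed
    then have yc: "y \<in> coprimeN p" using h unfolding coprimeN_def by simp
    have "\<exists>s\<in>powN a. \<exists>k. s = y + p ^ m * k" if m: "m \<ge> 1" for m
    proof -
      obtain k where k: "[y = a^k] (mod p^m)" using h m by blast
      define t where "t = totient (p ^ m)"
      have t1: "t \<ge> 1" unfolding t_def using p by (simp add: Suc_le_eq prime_gt_0_nat)
      define k' where "k' = k + t * (y + 1)"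
      have "[a ^ t = 1] (mod p ^ m)" unfolding t_def using copa by (intro euler_theorem) simp
      then have "[(a ^ t) ^ (y+1) = 1 ^ (y+1)] (mod p ^ m)" by (rule cong_pow)
      then have "[a ^ k * (a ^ t) ^ (y+1) = a ^ k * 1] (mod p ^ m)" by (intro cong_mult) auto
      then have c1: "[a ^ k' = a ^ k] (mod p ^ m)" unfolding k'_def by (simp add: power_add power_mult)
      have "[a ^ k' = y] (mod p ^ m)" using cong_trans[OF c1 cong_sym[OF k]] .
      moreover have k'y: "k' \<ge> y + 1" unfolding k'_def using t1 by (metis le_add2 mult_le_mono1 mult_1 trans_le_add2)
      moreover have "y \<le> a ^ k'"
      proof -
        have "k' < 2 ^ k'" by (rule less_exp)
        also have "2 ^ k' \<le> a ^ k'" using a2 by (rule power_mono) simp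
        finally show ?thesis using k'y by simp
      qed
      ultimately obtain q where q: "a ^ k' = q * p ^ m + y" using cong_le_nat by blast
      have "a ^ k' \<in> powN a" unfolding powN_def using k'y by auto
      with q show ?thesis by (intro bexI[of _ "a ^ k'"]) (auto simp: algebra_simps)
    qed
    with yc show "y \<in> coprimeN p \<and> (\<forall>m\<ge>1. \<exists>s\<in>powN a. \<exists>k. s = y + p ^ m * k)" by blast
  qed
  then show ?thesis unfolding closure_char[OF p] Xa_def by blast
qed

lemma pi_Xa:
  assumes "n \<ge> 1" "a \<ge> 1"
  shows "pi_res p n ` Xa p a = range (\<lambda>k. a ^ k mod p ^ n)"
proof
  show "pi_res p n ` Xa p a \<subseteq> range (\<lambda>k. a ^ k mod p ^ n)"
    using assms(1) unfolding Xa_def pi_res_def cong_def by blast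
  show "range (\<lambda>k. a ^ k mod p ^ n) \<subseteq> pi_res p n ` Xa p a"
  proof
    fix r assume "r \<in> range (\<lambda>k. a ^ k mod p ^ n)"
    then obtain k where r: "r = a ^ k mod p ^ n" by blast
    have "a ^ k \<in> Xa p a" unfolding Xa_def using assms(2) by (auto intro!: exI[of _ k])
    then show "r \<in> pi_res p n ` Xa p a" unfolding r pi_res_def by blast
  qed
qed

lemma card_range_pow:
  fixes M a :: nat
  assumes "coprime M a"
  shows "card (range (\<lambda>k. a ^ k mod M)) = ord M a"
proof -
  have "range (\<lambda>k. a ^ k mod M) = (\<lambda>k. a ^ k mod M) ` {..<ord M a}"
  proof
    show "range (\<lambda>k. a ^ k mod M) \<subseteq> (\<lambda>k. a ^ k mod M) ` {..<ord M a}"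
    proof
      fix r assume "r \<in> range (\<lambda>k. a ^ k mod M)"
      then obtain k where r: "r = a ^ k mod M" by blast
      have o: "ord M a > 0" using assms by simp
      have "[a ^ k = a ^ (k mod ord M a)] (mod M)"
        using order_divides_expdiff[OF assms] by (simp add: cong_def)
      then have "r = a ^ (k mod ord M a) mod M" unfolding r cong_def .
      moreover have "k mod ord M a < ord M a" using o by simp
      ultimately show "r \<in> (\<lambda>k. a ^ k mod M) ` {..<ord M a}" by blast
    qed
  qed auto
  then show ?thesis using card_image[OF inj_power_mod[OF assms]] by simp
qed



lemma get_uv:
  assumes p: "prime p" "odd p" and a: "a \<in> coprimeN p" "a \<noteq> 1"
  shows "\<exists>v u. v \<ge> 1 \<and> \<not> int p dvd u \<and> int a ^ (p-1) = 1 + u * int p ^ v"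
proof -
  have a2: "a \<ge> 2" using a_ge2[OF a] .
  have p2: "p \<ge> 2" using p(1) prime_ge_2_nat by blast
  define b where "b = a ^ (p - 1)"
  have "a ^ 1 \<le> a ^ (p - 1)" using a2 p2 by (intro power_increasing) auto
  then have b2: "b \<ge> 2" unfolding b_def using a2 by simp
  define x where "x = b - 1"
  have x0: "x \<noteq> 0" unfolding x_def using b2 by simp
  have nu: "\<not> is_unit p" using p2 by simp
  have "[b = 1] (mod p)" unfolding b_def
    using fermat_theorem[OF p(1)] a unfolding coprimeN_def by simp
  then have px: "p dvd x" unfolding x_def using b2
    by (simp add: cong_altdef_nat)
  obtain y where y: "x = p ^ multiplicity p x * y" "\<not> p dvd y"
    using multiplicity_decompose'[OF x0 nu] by blast
  have v1: "multiplicity p x \<ge> 1" using multiplicity_gt_zero_iff[OF x0 nu] px by simp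
  have "int a ^ (p-1) = 1 + int y * int p ^ multiplicity p x"
  proof -
    have "int a ^ (p-1) = int b" unfolding b_def by simp
    also have "\<dots> = 1 + int x" unfolding x_def using b2 by simp
    also have "\<dots> = 1 + int y * int p ^ multiplicity p x" using y(1)
      by (metis mult.commute of_nat_mult of_nat_power)
    finally show ?thesis .
  qed
  moreover have "\<not> int p dvd int y" using y(2) by simp
  ultimately show ?thesis using v1 by blast
qed

lemma Xa_preim:
  assumes p: "prime p" "odd p" and a: "a \<in> coprimeN p" "a \<noteq> 1"
  shows "\<exists>v\<ge>1. \<forall>n\<ge>v. Xa p a = {y. y \<ge> 1 \<and> (\<exists>k. [y = a^k] (mod p^n))}"
proof -
  obtain v u where vu: "v \<ge> 1" "\<not> int p dvd u" "int a ^ (p-1) = 1 + u * int p ^ v"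
    using get_uv[OF p a] by blast
  have copa: "coprime a p" using coprime_of_coprimeN[OF p(1) a(1)] .
  have "Xa p a = {y. y \<ge> 1 \<and> (\<exists>k. [y = a^k] (mod p^n))}" if n: "n \<ge> v" for n
  proof
    show "Xa p a \<subseteq> {y. y \<ge> 1 \<and> (\<exists>k. [y = a^k] (mod p^n))}"
      unfolding Xa_def using n vu(1) by auto
    show "{y. y \<ge> 1 \<and> (\<exists>k. [y = a^k] (mod p^n))} \<subseteq> Xa p a"
    proof
      fix y assume y: "y \<in> {y. y \<ge> 1 \<and> (\<exists>k. [y = a^k] (mod p^n))}"
      have up: "\<exists>k. [y = a^k] (mod p^m)" if "m \<ge> n" for m
        using that
      proof (induction m rule: dec_induct)
        case base then show ?case using y by blast
      next
        case (step m)
        then obtain k where "[y = a^k] (mod p^m)" by blast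
        from lift_step[OF p copa vu(1) vu(2) vu(3) _ this] step.hyps n
        show ?case by simp
      qed
      have "\<exists>k. [y = a^k] (mod p^m)" if "m \<ge> 1" for m
      proof (cases "m \<le> n")
        case True
        obtain k where k: "[y = a^k] (mod p^n)" using y by blast
        have "p ^ m dvd p ^ n" using True by (rule le_imp_power_dvd)
        then show ?thesis using cong_dvd_modulus_nat[OF k] by blast
      next
        case False then show ?thesis using up by simp
      qed
      then show "y \<in> Xa p a" unfolding Xa_def using y by blast
    qed
  qed
  then show ?thesis using vu(1) by blast
qed



definition preim :: "nat \<Rightarrow> nat \<Rightarrow> nat set \<Rightarrow> bool" where
  "preim p n X \<longleftrightarrow> X = {x. x \<ge> 1 \<and> pi_res p n x \<in> pi_res p n ` X}"

lemma preim_mono: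
  assumes "preim p n X" "n \<le> N"
  shows "preim p N X"
  unfolding preim_def
proof
  have X: "X = {x. x \<ge> 1 \<and> pi_res p n x \<in> pi_res p n ` X}" using assms(1) unfolding preim_def .
  show "X \<subseteq> {x. x \<ge> 1 \<and> pi_res p N x \<in> pi_res p N ` X}"
  proof
    fix x assume "x \<in> X"
    moreover then have "x \<ge> 1" using X by blast
    ultimately show "x \<in> {x. x \<ge> 1 \<and> pi_res p N x \<in> pi_res p N ` X}" by blast
  qed
  show "{x. x \<ge> 1 \<and> pi_res p N x \<in> pi_res p N ` X} \<subseteq> X"
  proof
    fix x assume "x \<in> {x. x \<ge> 1 \<and> pi_res p N x \<in> pi_res p N ` X}"
    then obtain x' where x: "x \<ge> 1" "x' \<in> X" "x mod p ^ N = x' mod p ^ N"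
      unfolding pi_res_def by blast
    have d: "p ^ n dvd p ^ N" using assms(2) by (rule le_imp_power_dvd)
    have "x mod p ^ n = x mod p ^ N mod p ^ n" by (simp add: mod_mod_cancel[OF d])
    also have "\<dots> = x' mod p ^ N mod p ^ n" using x(3) by simp
    also have "\<dots> = x' mod p ^ n" by (simp add: mod_mod_cancel[OF d])
    finally have "x mod p ^ n = x' mod p ^ n" .
    then have "x \<in> {x. x \<ge> 1 \<and> pi_res p n x \<in> pi_res p n ` X}"
      using x unfolding pi_res_def by blast
    then show "x \<in> X" using X by blast
  qed
qed

lemma card_count:
  fixes M K :: nat
  assumes "M > 0" "S \<subseteq> {..<M}"
  shows "card {u. u < M * K \<and> u mod M \<in> S} = K * card S"
proof -
  let ?f = "\<lambda>(s, i). s + M * i"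
  have inj: "inj_on ?f (S \<times> {..<K})"
  proof (rule inj_onI, clarify)
    fix s i s' i' assume h: "s \<in> S" "i < K" "s' \<in> S" "i' < K" "s + M * i = s' + M * i'"
    have "s < M" "s' < M" using h assms(2) by auto
    then have "(s + M * i) mod M = s" "(s' + M * i') mod M = s'"
      "(s + M * i) div M = i" "(s' + M * i') div M = i'" using assms(1) by auto
    then show "s = s' \<and> i = i'" using h(5) assms(1) by simp
  qed
  have img: "?f ` (S \<times> {..<K}) = {u. u < M * K \<and> u mod M \<in> S}"
  proof (intro subset_antisym subsetI)
    fix u assume "u \<in> ?f ` (S \<times> {..<K})"
    then obtain z where z: "z \<in> S \<times> {..<K}" "u = ?f z" by (rule imageE)
    obtain s i where zi: "z = (s, i)" by (cases z)
    have h: "s \<in> S" "i < K" "u = s + M * i" using z zi by auto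
    have s: "s < M" using h assms(2) by auto
    have "s + M * i < M + M * i" using s by simp
    also have "\<dots> = M * (i + 1)" by (simp add: algebra_simps)
    also have "\<dots> \<le> M * K" using h(2) by (intro mult_le_mono2) simp
    finally have "u < M * K" using h by simp
    moreover have "u mod M = s" using h s by simp
    ultimately show "u \<in> {u. u < M * K \<and> u mod M \<in> S}" using h by simp
  next
    fix u assume u: "u \<in> {u. u < M * K \<and> u mod M \<in> S}"
    have "u < K * M" using u by (simp add: mult.commute)
    then have "u div M < K" using assms(1) by (simp add: div_less_iff_less_mult)
    then have mem: "(u mod M, u div M) \<in> S \<times> {..<K}" using u by simp
    have "u = ?f (u mod M, u div M)" by simp
    from image_eqI[where f="?f", OF this mem] show "u \<in> ?f ` (S \<times> {..<K})" .
  qed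
  have fin: "finite S" using assms(2) finite_subset by blast
  have "card {u. u < M * K \<and> u mod M \<in> S} = card (S \<times> {..<K})"
    using card_image[OF inj] img by simp
  also have "\<dots> = K * card S" using fin by (simp add: card_cartesian_product)
  finally show ?thesis .
qed

lemma pi_lift:
  assumes p: "prime p" and pre: "preim p n X" and n: "n \<ge> 1" "n \<le> N"
    and cop: "\<forall>x\<in>X. \<not> p dvd x"
  shows "card (pi_res p N ` X) = p ^ (N - n) * card (pi_res p n ` X)"
proof -
  have X: "X = {x. x \<ge> 1 \<and> pi_res p n x \<in> pi_res p n ` X}" using pre unfolding preim_def .
  have Xm: "x \<in> X \<longleftrightarrow> x \<ge> 1 \<and> pi_res p n x \<in> pi_res p n ` X" for x
    using arg_cong[OF X, of "\<lambda>S. x \<in> S"] by simp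
  have pN: "p ^ N = p ^ n * p ^ (N - n)" using n by (simp add: power_add[symmetric])
  have ppos: "p ^ n > 0" using p by (simp add: prime_gt_0_nat)
  have d: "p ^ n dvd p ^ N" using n(2) by (rule le_imp_power_dvd)
  have e: "pi_res p N ` X = {u. u < p ^ n * p ^ (N - n) \<and> u mod p ^ n \<in> pi_res p n ` X}"
  proof (intro subset_antisym subsetI)
    fix u assume "u \<in> pi_res p N ` X"
    then obtain x where x: "x \<in> X" "u = x mod p ^ N" unfolding pi_res_def by blast
    have "u < p ^ N" using x(2) p by (simp add: prime_gt_0_nat)
    then have 1: "u < p ^ n * p ^ (N - n)" using pN by simp
    have "u mod p ^ n = x mod p ^ n" using x(2) mod_mod_cancel[OF d] by simp
    then have 2: "u mod p ^ n \<in> pi_res p n ` X"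
      unfolding pi_res_def by (rule image_eqI[OF _ x(1)])
    from 1 2 show "u \<in> {u. u < p ^ n * p ^ (N - n) \<and> u mod p ^ n \<in> pi_res p n ` X}"
      by simp
  next
    fix u assume u: "u \<in> {u. u < p ^ n * p ^ (N - n) \<and> u mod p ^ n \<in> pi_res p n ` X}"
    then obtain x where x: "x \<in> X" "u mod p ^ n = x mod p ^ n" unfolding pi_res_def by blast
    have "\<not> p ^ n dvd x"
    proof
      assume "p ^ n dvd x"
      moreover have "p dvd p ^ n" using n(1) by (simp add: dvd_power)
      ultimately have "p dvd x" by (metis dvd_trans)
      then show False using cop x(1) by blast
    qed
    then have "u mod p ^ n \<noteq> 0" using x(2) by (simp add: dvd_eq_mod_eq_0)
    then have "u \<ge> 1" by (cases u) auto
    moreover have "pi_res p n u \<in> pi_res p n ` X" using u unfolding pi_res_def by simp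
    ultimately have "u \<in> X" using Xm[of u] by blast
    moreover have "u mod p ^ N = u" using u pN by simp
    ultimately show "u \<in> pi_res p N ` X" unfolding pi_res_def by (intro image_eqI[of _ _ u]) auto
  qed
  have sub: "pi_res p n ` X \<subseteq> {..<p ^ n}" unfolding pi_res_def using ppos by auto
  show ?thesis unfolding e using card_count[OF ppos sub] by simp
qed

lemma units_card:
  assumes "prime p" "n \<ge> 1"
  shows "card (units_res (p ^ n)) = totient (p ^ n)"
proof -
  have m1: "p ^ n > 1" using assms(2) by (intro one_less_power prime_gt_1_nat[OF assms(1)]) simp
  have "units_res (p ^ n) = totatives (p ^ n)"
  proof (intro subset_antisym subsetI)
    fix u assume "u \<in> units_res (p ^ n)"
    then have u: "u < p ^ n" "coprime u (p ^ n)" unfolding units_res_def by auto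
    have "u \<noteq> 0" using u(2) m1 by (cases "u = 0") auto
    then show "u \<in> totatives (p ^ n)" using u unfolding totatives_def by auto
  next
    fix u assume "u \<in> totatives (p ^ n)"
    then have u: "0 < u" "u \<le> p ^ n" "coprime u (p ^ n)" unfolding totatives_def by auto
    have "u \<noteq> p ^ n" using u(3) m1 by (cases "u = p ^ n") auto
    then show "u \<in> units_res (p ^ n)" using u unfolding units_res_def by auto
  qed
  then show ?thesis unfolding totient_def by simp
qed



lemma index_dvd:
  fixes \<phi> oa ob :: nat
  assumes "\<phi> > 0" "oa dvd \<phi>" "ob dvd \<phi>"
  shows "(\<phi> div ob dvd \<phi> div oa) \<longleftrightarrow> oa dvd ob"
proof -
  obtain ia where ia: "\<phi> = oa * ia" using assms(2) by blast
  obtain ib where ib: "\<phi> = ob * ib" using assms(3) by blast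
  have oa0: "oa > 0" "ia > 0" using ia assms(1) by auto
  have ob0: "ob > 0" "ib > 0" using ib assms(1) by auto
  have da: "\<phi> div oa = ia" using ia oa0 by simp
  have db: "\<phi> div ob = ib" using ib ob0 by simp
  show ?thesis unfolding da db
  proof
    assume "ib dvd ia"
    then obtain c where c: "ia = ib * c" by blast
    have "ob * ib = (oa * c) * ib" using ia ib c by (simp add: algebra_simps)
    then have "ob = oa * c" using ob0 by simp
    then show "oa dvd ob" by simp
  next
    assume "oa dvd ob"
    then obtain c where c: "ob = oa * c" by blast
    have "oa * ia = ob * ib" using ia ib by simp
    also have "\<dots> = oa * (c * ib)" using c by simp
    finally have "oa * ia = oa * (c * ib)" .
    then have "ia = c * ib" using oa0(1) by (simp add: mult.commute)
    then show "ib dvd ia" by (simp add: dvd_triv_right)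
  qed
qed

lemma in_range_primroot:
  fixes a M g :: nat
  assumes M: "M > 1" and g: "residue_primroot M g" and ca: "coprime M a"
  shows "\<exists>\<alpha>. [a = g ^ \<alpha>] (mod M)"
proof -
  have bij: "bij_betw (\<lambda>i. g ^ i mod M) {..<totient M} (totatives M)"
    by (rule residue_primroot_is_generator[OF M g])
  have c: "coprime (a mod M) M" using ca M by (simp add: coprime_commute)
  have "a mod M \<noteq> 0"
  proof
    assume "a mod M = 0"
    then have "coprime 0 M" using c by simp
    then show False using M by simp
  qed
  then have "a mod M \<in> totatives M" using c M unfolding totatives_def
    by (auto simp: less_imp_le)
  then obtain \<alpha> where "a mod M = g ^ \<alpha> mod M"
    using bij unfolding bij_betw_def by (metis (no_types, lifting) imageE)
  then show ?thesis unfolding cong_def by auto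
qed

lemma cyc:
  fixes a b p N :: nat
  assumes p: "prime p" "odd p" and N: "N \<ge> 1" and ca: "coprime a p" and cb: "coprime b p"
    and d: "ord (p^N) a dvd ord (p^N) b"
  shows "\<exists>j. [a = b^j] (mod p^N)"
proof -
  obtain g where g: "\<forall>k>0. residue_primroot (p^k) g"
    using residue_primroot_odd_prime_power_exists[OF p] by blast
  define M where "M = p ^ N"
  have M1: "M > 1" unfolding M_def using N by (intro one_less_power prime_gt_1_nat[OF p(1)]) simp
  have gM: "residue_primroot M g" unfolding M_def using g N by simp
  define \<phi> where "\<phi> = totient M"
  have phi0: "\<phi> > 0" unfolding \<phi>_def using M1 by simp
  have cg: "coprime M g" and og: "ord M g = \<phi>" using gM unfolding residue_primroot_def \<phi>_def by auto
  have cMa: "coprime M a" unfolding M_def using ca by (simp add: coprime_commute)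
  have cMb: "coprime M b" unfolding M_def using cb by (simp add: coprime_commute)
  obtain \<alpha> where al: "[a = g ^ \<alpha>] (mod M)" using in_range_primroot[OF M1 gM cMa] by blast
  obtain \<beta>0 where be0: "[b = g ^ \<beta>0] (mod M)" using in_range_primroot[OF M1 gM cMb] by blast
  define \<beta> where "\<beta> = \<beta>0 + \<phi>"
  have gphi: "[g ^ \<phi> = 1] (mod M)" using ord[of g M] og by simp
  have be: "[b = g ^ \<beta>] (mod M)"
  proof -
    have "[g ^ \<beta>0 * g ^ \<phi> = g ^ \<beta>0 * 1] (mod M)" by (intro cong_mult gphi) auto
    then have "[g ^ \<beta> = g ^ \<beta>0] (mod M)" unfolding \<beta>_def by (simp add: power_add)
    then show ?thesis using be0 by (metis cong_sym cong_trans)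
  qed
  have bpos: "\<beta> \<noteq> 0" unfolding \<beta>_def using phi0 by simp
  define e where "e = gcd \<alpha> \<phi>"
  define dd where "dd = gcd \<beta> \<phi>"
  have oa: "ord M a = \<phi> div e" unfolding e_def
    using ord_cong[OF al] ord_power[OF cg, of \<alpha>] og by simp
  have ob: "ord M b = \<phi> div dd" unfolding dd_def
    using ord_cong[OF be] ord_power[OF cg, of \<beta>] og by simp
  have "\<phi> div e dvd \<phi> div dd" using d oa ob unfolding M_def by simp
  then have "dd dvd e" using index_dvd[OF phi0, of dd e] unfolding e_def dd_def by simp
  then have dda: "dd dvd \<alpha>" unfolding e_def by (meson dvd_trans gcd_dvd1)
  obtain x y where xy: "\<beta> * x = \<phi> * y + dd" unfolding dd_def using bezout_nat[OF bpos] by blast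
  have "[b ^ x = (g ^ \<beta>) ^ x] (mod M)" using be by (rule cong_pow)
  also have "(g ^ \<beta>) ^ x = (g ^ \<phi>) ^ y * g ^ dd" by (simp add: power_mult[symmetric] xy power_add)
  also have "[(g ^ \<phi>) ^ y * g ^ dd = 1 ^ y * g ^ dd] (mod M)" by (intro cong_mult cong_pow gphi) auto
  finally have bx: "[b ^ x = g ^ dd] (mod M)" by simp
  obtain q where q: "\<alpha> = dd * q" using dda by blast
  have "[a = g ^ \<alpha>] (mod M)" by (rule al)
  also have "g ^ \<alpha> = (g ^ dd) ^ q" by (simp add: q power_mult)
  also have "[(g ^ dd) ^ q = (b ^ x) ^ q] (mod M)" using bx by (intro cong_pow) (rule cong_sym)
  also have "(b ^ x) ^ q = b ^ (x * q)" by (simp add: power_mult)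
  finally show ?thesis unfolding M_def by blast
qed

lemma range_sub_iff:
  fixes a b p N :: nat
  assumes p: "prime p" "odd p" and N: "N \<ge> 1" and ca: "coprime a p" and cb: "coprime b p"
  shows "range (\<lambda>k. a ^ k mod p ^ N) \<subseteq> range (\<lambda>k. b ^ k mod p ^ N) \<longleftrightarrow>
         ord (p^N) a dvd ord (p^N) b"
proof
  assume h: "range (\<lambda>k. a ^ k mod p ^ N) \<subseteq> range (\<lambda>k. b ^ k mod p ^ N)"
  have "a ^ 1 mod p ^ N \<in> range (\<lambda>k. b ^ k mod p ^ N)" using h by blast
  then obtain j where j: "a mod p ^ N = b ^ j mod p ^ N" by auto
  have "[a ^ ord (p^N) b = (b ^ j) ^ ord (p^N) b] (mod p ^ N)"
    using j unfolding cong_def by (intro cong_pow[unfolded cong_def]) 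
  also have "(b ^ j) ^ ord (p^N) b = (b ^ ord (p^N) b) ^ j" by (simp add: power_mult[symmetric] mult.commute)
  also have "[(b ^ ord (p^N) b) ^ j = 1 ^ j] (mod p ^ N)" by (intro cong_pow ord)
  finally show "ord (p^N) a dvd ord (p^N) b" by (simp add: ord_divides')
next
  assume "ord (p^N) a dvd ord (p^N) b"
  then obtain j where j: "[a = b^j] (mod p^N)" using cyc[OF p N ca cb] by blast
  show "range (\<lambda>k. a ^ k mod p ^ N) \<subseteq> range (\<lambda>k. b ^ k mod p ^ N)"
  proof
    fix r assume "r \<in> range (\<lambda>k. a ^ k mod p ^ N)"
    then obtain k where r: "r = a ^ k mod p ^ N" by blast
    have "[a ^ k = (b ^ j) ^ k] (mod p ^ N)" using j by (rule cong_pow)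
    then have "r = b ^ (j * k) mod p ^ N" unfolding r cong_def by (simp add: power_mult)
    then show "r \<in> range (\<lambda>k. b ^ k mod p ^ N)" by blast
  qed
qed



lemma not_dvd_pow:
  fixes p a :: nat
  assumes p: "prime p" and copa: "coprime a p"
  shows "\<not> p dvd a ^ k"
proof
  assume "p dvd a ^ k"
  then have "p dvd a" by (rule prime_dvd_power[OF p])
  then have "p = 1" using coprime_common_divisor_nat[OF copa _ dvd_refl] by blast
  then show False using p by simp
qed

lemma Xa_nodvd:
  assumes p: "prime p" and a: "a \<in> coprimeN p"
  shows "\<forall>x\<in>Xa p a. \<not> p dvd x"
proof
  fix x assume "x \<in> Xa p a"
  then obtain k where k: "[x = a^k] (mod p^1)" unfolding Xa_def by blast
  have "\<not> p dvd a ^ k" by (rule not_dvd_pow[OF p coprime_of_coprimeN[OF p a]])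
  then show "\<not> p dvd x" using cong_dvd_iff[of x "a^k" p] k by simp
qed

lemma Xa_preim':
  assumes "n \<ge> 1" "a \<ge> 1" "Xa p a = {y. y \<ge> 1 \<and> (\<exists>k. [y = a^k] (mod p^n))}"
  shows "preim p n (Xa p a)"
proof -
  have "{y. y \<ge> 1 \<and> (\<exists>k. [y = a^k] (mod p^n))} =
        {x. x \<ge> 1 \<and> pi_res p n x \<in> pi_res p n ` Xa p a}"
    unfolding pi_Xa[OF assms(1,2)] pi_res_def cong_def by auto
  then show ?thesis unfolding preim_def using assms(3) by simp
qed

lemma Xa_exists:
  assumes p: "prime p" "odd p" and a: "a \<in> coprimeN p" "a \<noteq> 1"
  shows "\<exists>n. n \<ge> 1 \<and> Xa p a = {x. x \<ge> 1 \<and> pi_res p n x \<in> pi_res p n ` Xa p a}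
             \<and> card (pi_res p n ` Xa p a) \<ge> max p 3"
proof -
  obtain v where v: "v \<ge> 1" "\<forall>n\<ge>v. Xa p a = {y. y \<ge> 1 \<and> (\<exists>k. [y = a^k] (mod p^n))}"
    using Xa_preim[OF p a] by blast
  have a1: "a \<ge> 1" using a unfolding coprimeN_def by simp
  have e1: "Xa p a = {y. y \<ge> 1 \<and> (\<exists>k. [y = a^k] (mod p^v))}" using v(2) by blast
  have e2: "Xa p a = {y. y \<ge> 1 \<and> (\<exists>k. [y = a^k] (mod p^(v+1)))}" using v(2)[rule_format, of "v+1"] by simp
  have pv: "preim p v (Xa p a)" by (rule Xa_preim'[OF v(1) a1 e1])
  have pv1: "preim p (v+1) (Xa p a)" by (rule Xa_preim'[OF _ a1 e2]) simp
  have c: "card (pi_res p (v+1) ` Xa p a) = p ^ 1 * card (pi_res p v ` Xa p a)"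
    using pi_lift[OF p(1) pv v(1) _ Xa_nodvd[OF p(1) a(1)], of "v+1"] by simp
  have "finite (pi_res p v ` Xa p a)"
    by (rule finite_subset[of _ "{..<p^v}"]) (auto simp: pi_res_def prime_gt_0_nat[OF p(1)])
  moreover have "pi_res p v ` Xa p a \<noteq> {}" unfolding pi_Xa[OF v(1) a1] by simp
  ultimately have "card (pi_res p v ` Xa p a) \<ge> 1" by (simp add: Suc_le_eq card_gt_0_iff)
  then have cp: "card (pi_res p (v+1) ` Xa p a) \<ge> p" using c by simp
  have "p \<noteq> 2" using p(2) by auto
  then have "p \<ge> 3" using prime_ge_2_nat[OF p(1)] by simp
  then have "max p 3 = p" by simp
  then show ?thesis using pv1 cp v(1) unfolding preim_def by (intro exI[of _ "v+1"]) auto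
qed

lemma iX_eq:
  assumes p: "prime p" "odd p" and a: "a \<in> coprimeN p" "a \<noteq> 1" and X: "X = Xa p a"
    and N: "N \<ge> nX p X"
  shows "nX p X \<ge> 1" "preim p N X" "iX p X = totient (p ^ N) div ord (p ^ N) a"
proof -
  let ?P = "\<lambda>n. n \<ge> 1 \<and> X = {x. x \<ge> 1 \<and> pi_res p n x \<in> pi_res p n ` X} \<and>
      card (pi_res p n ` X) \<ge> max p 3"
  have "?P (nX p X)" unfolding nX_def
    by (rule LeastI_ex) (use Xa_exists[OF p a] X in simp)
  then have n1: "nX p X \<ge> 1" and pn: "preim p (nX p X) X" unfolding preim_def by auto
  show "nX p X \<ge> 1" by (rule n1)
  show pN: "preim p N X" by (rule preim_mono[OF pn N])
  define n where "n = nX p X"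
  have N1: "N \<ge> 1" using n1 N by simp
  have a1: "a \<ge> 1" using a unfolding coprimeN_def by simp
  have ppos: "p > 0" using p(1) by (simp add: prime_gt_0_nat)
  have cN: "card (pi_res p N ` X) = p ^ (N - n) * card (pi_res p n ` X)"
    unfolding n_def using pi_lift[OF p(1) pn n1 N] Xa_nodvd[OF p(1) a(1)] X by simp
  have tN: "totient (p ^ N) = p ^ (N - n) * totient (p ^ n)"
  proof -
    have "totient (p ^ N) = p ^ (N - 1) * (p - 1)" using totient_prime_power[OF p(1)] N1 by simp
    also have "N - 1 = (N - n) + (n - 1)" using N n1 unfolding n_def by simp
    also have "p ^ ((N - n) + (n - 1)) * (p - 1) = p ^ (N - n) * (p ^ (n - 1) * (p - 1))"
      by (simp add: power_add)
    also have "p ^ (n - 1) * (p - 1) = totient (p ^ n)"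
      using totient_prime_power[OF p(1)] n1 unfolding n_def by simp
    finally show ?thesis .
  qed
  have cop: "coprime (p ^ N) a" using coprime_of_coprimeN[OF p(1) a(1)] by (simp add: coprime_commute)
  have co: "card (pi_res p N ` X) = ord (p ^ N) a"
    unfolding X pi_Xa[OF N1 a1] by (rule card_range_pow[OF cop])
  have "iX p X = totient (p ^ n) div card (pi_res p n ` X)"
    unfolding iX_def n_def using units_card[OF p(1) n1] by simp
  also have "\<dots> = (p ^ (N - n) * totient (p ^ n)) div (p ^ (N - n) * card (pi_res p n ` X))"
    using ppos by (simp add: div_mult_mult1)
  also have "\<dots> = totient (p ^ N) div ord (p ^ N) a" using tN cN co by simp
  finally show "iX p X = totient (p ^ N) div ord (p ^ N) a" .
qed

theorem lemma4p3:
  fixes p :: nat and X Y :: "nat set"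
  assumes "prime p" and "odd p" and "X \<in> Xp p" and "Y \<in> Xp p"
  shows "X \<subseteq> Y \<longleftrightarrow> iX p Y dvd iX p X"
proof -
  note p = assms(1,2)
  obtain a where a: "a \<in> coprimeN p" "a \<noteq> 1" "X = padic_top p closure_of powN a"
    using assms(3) unfolding Xp_def by blast
  obtain b where b: "b \<in> coprimeN p" "b \<noteq> 1" "Y = padic_top p closure_of powN b"
    using assms(4) unfolding Xp_def by blast
  have Xa: "X = Xa p a" using a closure_eq_Xa[OF p(1)] by simp
  have Yb: "Y = Xa p b" using b closure_eq_Xa[OF p(1)] by simp
  define N where "N = max (nX p X) (nX p Y)"
  have NX: "N \<ge> nX p X" and NY: "N \<ge> nX p Y" unfolding N_def by auto
  note ix = iX_eq[OF p a(1,2) Xa NX]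
  note iy = iX_eq[OF p b(1,2) Yb NY]
  have N1: "N \<ge> 1" using ix(1) NX by simp
  have a1: "a \<ge> 1" using a unfolding coprimeN_def by simp
  have b1: "b \<ge> 1" using b unfolding coprimeN_def by simp
  have ca: "coprime a p" by (rule coprime_of_coprimeN[OF p(1) a(1)])
  have cb: "coprime b p" by (rule coprime_of_coprimeN[OF p(1) b(1)])
  have "X \<subseteq> Y \<longleftrightarrow> pi_res p N ` X \<subseteq> pi_res p N ` Y"
  proof
    assume "X \<subseteq> Y" then show "pi_res p N ` X \<subseteq> pi_res p N ` Y" by (rule image_mono)
  next
    assume h: "pi_res p N ` X \<subseteq> pi_res p N ` Y"
    have Ym: "y \<in> Y \<longleftrightarrow> y \<ge> 1 \<and> pi_res p N y \<in> pi_res p N ` Y" for y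
      using arg_cong[OF iy(2)[unfolded preim_def], of "\<lambda>S. y \<in> S"] by simp
    show "X \<subseteq> Y"
    proof
      fix x assume x: "x \<in> X"
      have "x \<ge> 1" using x Xa unfolding Xa_def by simp
      moreover have "pi_res p N x \<in> pi_res p N ` Y" using h x by blast
      ultimately show "x \<in> Y" using Ym[of x] by blast
    qed
  qed
  also have "\<dots> \<longleftrightarrow> ord (p ^ N) a dvd ord (p ^ N) b"
    unfolding Xa Yb pi_Xa[OF N1 a1] pi_Xa[OF N1 b1] by (rule range_sub_iff[OF p N1 ca cb])
  also have "\<dots> \<longleftrightarrow> totient (p ^ N) div ord (p ^ N) b dvd totient (p ^ N) div ord (p ^ N) a"
  proof (rule index_dvd[symmetric])
    show "totient (p ^ N) > 0" using p(1) by (simp add: prime_gt_0_nat)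
    show "ord (p ^ N) a dvd totient (p ^ N)" using ca by (intro order_divides_totient) (simp add: coprime_commute)
    show "ord (p ^ N) b dvd totient (p ^ N)" using cb by (intro order_divides_totient) (simp add: coprime_commute)
  qed
  also have "\<dots> \<longleftrightarrow> iX p Y dvd iX p X" using ix(3) iy(3) by simp
  finally show ?thesis .
qed


end
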